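(* Let $A=(a_{ij})$ and $B=(b_{ij})$ be two $4\times 4$ generalized tournament matrices with equal corresponding principal minors of orders $2$ and $3$. If $\mathcal{D}(A,B)$ and $\mathcal{E}(A,B)$ are both connected, then there exist a permutation matrix $P$ and real numbers $a,b\in[0,1]\setminus\{1/2\}$ such that $A=PM_{a,b}P^{t}$ and $B=PM_{1-a,b}P^{t}$. Moreover, $\det(A)=\det(B)$ if and only if $a=b$ or $a=1-b$.
   Context: A generalized tournament matrix of order $n$ is a real $n\times n$ matrix $M$ with nonnegative entries satisfying $M+M^{t}=J_n-I_n$. When $A,B$ have the same principal minors of order $2$, for $i\neq j$ one has $a_{ij}=b_{ij}$ or $a_{ij}=1-b_{ij}$; $\mathcal{E}(A,B)$ is the undirected graph on $\{1,2,3,4\}$ whose edges are the pairs $\{i,j\}$ with $a_{ij}=b_{ij}\neq 1/2$, and $\mathcal{D}(A,B)$ is the undirected graph on $\{1,2,3,4\}$ whose edges are the pairs $\{i,j\}$ with $a_{ij}=1-b_{ij}$ and $a_{ij}\neq 1/2$. For real $a,b$, $$M_{a,b}=\begin{pmatrix}0&a&b&b\\ 1-a&0&1-a&b\\ 1-b&a&0&a\\ 1-b&1-b&1-a&0\end{pmatrix}.$$ *)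

theory Defs
  imports "HOL-Analysis.Analysis"
begin

definition gen_tournament :: "real^'n^'n \<Rightarrow> bool" where
  "gen_tournament M \<longleftrightarrow> (\<forall>i j. 0 \<le> M$i$j) \<and>
     (\<forall>i j. M$i$j + M$j$i = (if i = j then 0 else 1))"

definition principal_minor :: "real^'n^'n \<Rightarrow> 'n set \<Rightarrow> real" where
  "principal_minor M S = (\<Sum>p\<in>{p. p permutes S}. of_int (sign p) * (\<Prod>i\<in>S. M$i$(p i)))"

definition E_graph :: "real^'n^'n \<Rightarrow> real^'n^'n \<Rightarrow> ('n \<times> 'n) set" where
  "E_graph A B = {(i,j). i \<noteq> j \<and> A$i$j = B$i$j \<and> A$i$j \<noteq> 1/2}"

definition D_graph :: "real^'n^'n \<Rightarrow> real^'n^'n \<Rightarrow> ('n \<times> 'n) set" where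
  "D_graph A B = {(i,j). i \<noteq> j \<and> A$i$j = 1 - B$i$j \<and> A$i$j \<noteq> 1/2}"

definition graph_connected :: "('n \<times> 'n) set \<Rightarrow> bool" where
  "graph_connected R \<longleftrightarrow> (\<forall>u v. (u, v) \<in> (R \<union> R\<inverse>)\<^sup>*)"

definition perm_matrix :: "('n \<Rightarrow> 'n) \<Rightarrow> real^'n^'n" where
  "perm_matrix \<sigma> = (\<chi> i j. if \<sigma> i = j then 1 else 0)"

definition is_perm_matrix :: "real^'n^'n \<Rightarrow> bool" where
  "is_perm_matrix P \<longleftrightarrow> (\<exists>\<sigma>. \<sigma> permutes (UNIV::'n set) \<and> P = perm_matrix \<sigma>)"

definition Mab :: "real \<Rightarrow> real \<Rightarrow> real^4^4" where
  "Mab a b = vector [vector [0, a, b, b],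
                     vector [1 - a, 0, 1 - a, b],
                     vector [1 - b, a, 0, a],
                     vector [1 - b, 1 - b, 1 - a, 0]]"

end

theory Submission imports Defs begin

definition LF :: "real^'n^'n \<Rightarrow> 'n set \<Rightarrow> ('n \<Rightarrow> 'n) \<Rightarrow> real" where
  "LF M S c = (\<Sum>p\<in>{p. p permutes S}. of_int (sign p) * (\<Prod>i\<in>S. M$i$(c (p i))))"

lemma LF_empty: "LF M {} c = 1"
  by (simp add: LF_def)

lemma LF_insert:
  assumes "finite S" "a \<notin> S"
  shows "LF M (insert a S) c =
    (\<Sum>b\<in>insert a S. (if a = b then 1 else -1) * M$a$(c b) * LF M S (c \<circ> Transposition.transpose a b))"
proof -
  have "LF M (insert a S) c = (\<Sum>b\<in>insert a S. \<Sum>q\<in>{p. p permutes S}.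
     of_int (sign (Transposition.transpose a b \<circ> q)) * (\<Prod>i\<in>insert a S. M$i$(c ((Transposition.transpose a b \<circ> q) i))))"
    unfolding LF_def by (rule sum_over_permutations_insert[OF assms])
  also have "\<dots> = (\<Sum>b\<in>insert a S. \<Sum>q\<in>{p. p permutes S}.
     (if a = b then 1 else -1) * M$a$(c b) * (of_int (sign q) * (\<Prod>i\<in>S. M$i$((c \<circ> Transposition.transpose a b) (q i)))))"
  proof (intro sum.cong refl)
    fix b q assume q: "q \<in> {p. p permutes S}"
    then have qp: "q permutes S" by simp
    have pq: "permutation q" using qp assms(1) permutation_permutes by blast
    have qa: "q a = a" using permutes_not_in[OF qp assms(2)] .
    have sg: "sign (Transposition.transpose a b \<circ> q) = sign (Transposition.transpose a b) * sign q"
      by (rule sign_compose[OF permutation_swap_id pq])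
    show "of_int (sign (Transposition.transpose a b \<circ> q)) * (\<Prod>i\<in>insert a S. M$i$(c ((Transposition.transpose a b \<circ> q) i))) =
      (if a = b then 1 else -1) * M$a$(c b) * (of_int (sign q) * (\<Prod>i\<in>S. M$i$((c \<circ> Transposition.transpose a b) (q i))))"
      using assms qa by (simp add: sg sign_swap_id prod.insert)
  qed
  also have "\<dots> = (\<Sum>b\<in>insert a S. (if a = b then 1 else -1) * M$a$(c b) * LF M S (c \<circ> Transposition.transpose a b))"
    unfolding LF_def by (simp add: sum_distrib_left)
  finally show ?thesis .
qed

lemma pm_LF: "principal_minor M S = LF M S id"
  by (simp add: principal_minor_def LF_def)

lemma det_LF: "det M = LF M UNIV id"
  by (simp add: det_def LF_def)

lemma pm2: "i \<noteq> j \<Longrightarrow> principal_minor M {i,j} = M$i$i * M$j$j - M$i$j * M$j$i"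
  by (simp add: pm_LF LF_insert LF_empty)

lemma pm3: "i \<noteq> j \<Longrightarrow> i \<noteq> k \<Longrightarrow> j \<noteq> k \<Longrightarrow> principal_minor M {i,j,k} =
   M$i$i * M$j$j * M$k$k - M$i$i * M$j$k * M$k$j - M$i$j * M$j$i * M$k$k
   + M$i$j * M$j$k * M$k$i + M$i$k * M$j$i * M$k$j - M$i$k * M$j$j * M$k$i"
  by (simp add: pm_LF LF_insert LF_empty algebra_simps)

lemma vector_4 [simp]:
 "(vector [x,y,z,w] ::('a::zero)^4)$1 = x"
 "(vector [x,y,z,w] ::('a::zero)^4)$2 = y"
 "(vector [x,y,z,w] ::('a::zero)^4)$3 = z"
 "(vector [x,y,z,w] ::('a::zero)^4)$4 = w"
  unfolding vector_def by simp_all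

lemma detMab: "det (Mab a b) - det (Mab (1-a) b) = - (a-b)*(a+b-1)*(2*a-1)*(2*b-1)"
  unfolding det_LF UNIV_4 
  by (simp add: LF_insert LF_empty Mab_def algebra_simps)


lemma conj_entry: "(perm_matrix \<sigma> ** M ** transpose (perm_matrix \<sigma>))$i$j = M$(\<sigma> i)$(\<sigma> j)"
proof -
  have d1: "\<And>x (k::'a) a. (if a = k then 1 else 0) * x = (if a = k then x else (0::real))" by simp
  have d2: "\<And>x (k::'a) a. x * (if a = k then 1 else 0) = (if a = k then x else (0::real))" by simp
  show ?thesis
    by (simp add: matrix_matrix_mult_def perm_matrix_def transpose_def d1 d2 sum_distrib_right)
qed

lemma det_perm_matrix: "\<sigma> permutes UNIV \<Longrightarrow> det (perm_matrix \<sigma>) = of_int (sign \<sigma>)"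
proof -
  assume s: "\<sigma> permutes UNIV"
  have "perm_matrix \<sigma> = (\<chi> i. (mat 1 :: real^'a^'a) $ (\<sigma> i))"
    by (simp add: perm_matrix_def mat_def vec_eq_iff)
  then show ?thesis using det_permute_rows[OF s, of "mat 1 :: real^'a^'a"] by simp
qed

lemma det_conj: "\<sigma> permutes UNIV \<Longrightarrow> det (perm_matrix \<sigma> ** M ** transpose (perm_matrix \<sigma>)) = det M"
proof -
  assume s: "\<sigma> permutes UNIV"
  have "real_of_int (sign \<sigma>) * real_of_int (sign \<sigma>) = 1"
    by (simp flip: of_int_mult)
  then show ?thesis using s by (simp add: det_mul det_perm_matrix)
qed

lemma tour_facts:
  assumes "gen_tournament A"
  shows "A$i$i = 0" "i \<noteq> j \<Longrightarrow> A$j$i = 1 - A$i$j" "0 \<le> A$i$j" "A$i$j \<le> 1"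
proof -
  have 1: "\<And>i j. 0 \<le> A$i$j" and 2: "\<And>i j. A$i$j + A$j$i = (if i = j then 0 else 1)"
    using assms unfolding gen_tournament_def by auto
  show "A$i$i = 0" using 2[of i i] by simp
  show "i \<noteq> j \<Longrightarrow> A$j$i = 1 - A$i$j" using 2[of i j] by simp
  show "0 \<le> A$i$j" by (rule 1)
  show "A$i$j \<le> 1" using 1[of j i] 2[of i j] by (auto split: if_splits)
qed

lemma core:
  fixes A B :: "real^4^4"
  assumes tA: "gen_tournament A" and tB: "gen_tournament B"
    and m3: "\<forall>i j k. i \<noteq> j \<and> i \<noteq> k \<and> j \<noteq> k \<longrightarrow>
       A$i$j*A$j$k*A$k$i + A$i$k*A$k$j*A$j$i = B$i$j*B$j$k*B$k$i + B$i$k*B$k$j*B$j$i"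
    and dist: "v1 \<noteq> v2" "v1 \<noteq> v3" "v1 \<noteq> v4" "v2 \<noteq> v3" "v2 \<noteq> v4" "v3 \<noteq> v4"
    and d12: "(v1,v2) \<in> D_graph A B" and d23: "(v2,v3) \<in> D_graph A B" and d34: "(v3,v4) \<in> D_graph A B"
    and e13: "(v1,v3) \<in> E_graph A B" and e14: "(v1,v4) \<in> E_graph A B" and e24: "(v2,v4) \<in> E_graph A B"
  shows "\<exists>P a b. is_perm_matrix P \<and> a \<in> {0..1} - {1/2} \<and> b \<in> {0..1} - {1/2} \<and>
           A = P ** Mab a b ** transpose P \<and> B = P ** Mab (1 - a) b ** transpose P \<and>
           (det A = det B \<longleftrightarrow> a = b \<or> a = 1 - b)"
proof -
  define a where "a = A$v1$v2"
  define b where "b = A$v1$v3"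
  note TA = tour_facts[OF tA] and TB = tour_facts[OF tB]
  have B12: "B$v1$v2 = 1 - a" and a2: "a \<noteq> 1/2" using d12 by (auto simp: D_graph_def a_def)
  have B23: "B$v2$v3 = 1 - A$v2$v3" and h23: "A$v2$v3 \<noteq> 1/2" using d23 by (auto simp: D_graph_def)
  have B34: "B$v3$v4 = 1 - A$v3$v4" and h34: "A$v3$v4 \<noteq> 1/2" using d34 by (auto simp: D_graph_def)
  have B13: "B$v1$v3 = b" and b2: "b \<noteq> 1/2" using e13 by (auto simp: E_graph_def b_def)
  have B14: "B$v1$v4 = A$v1$v4" and h14: "A$v1$v4 \<noteq> 1/2" using e14 by (auto simp: E_graph_def)
  have B24: "B$v2$v4 = A$v2$v4" and h24: "A$v2$v4 \<noteq> 1/2" using e24 by (auto simp: E_graph_def)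
  have T123: "(2*b-1)*(a + A$v2$v3 - 1) = 0"
  proof -
    have "A$v1$v2*A$v2$v3*A$v3$v1 + A$v1$v3*A$v3$v2*A$v2$v1 = B$v1$v2*B$v2$v3*B$v3$v1 + B$v1$v3*B$v3$v2*B$v2$v1"
      using m3 dist by blast
    then show ?thesis using TA(2)[OF dist(1)] TA(2)[OF dist(2)] TA(2)[OF dist(4)] TB(2)[OF dist(1)] TB(2)[OF dist(2)] TB(2)[OF dist(4)] B12 B23 B13 a_def b_def
      by algebra
  qed
  have A23: "A$v2$v3 = 1 - a" using T123 b2 by simp
  have T234: "(2*A$v2$v4-1)*(A$v2$v3 + A$v3$v4 - 1) = 0"
  proof -
    have "A$v2$v3*A$v3$v4*A$v4$v2 + A$v2$v4*A$v4$v3*A$v3$v2 = B$v2$v3*B$v3$v4*B$v4$v2 + B$v2$v4*B$v4$v3*B$v3$v2"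
      using m3 dist by blast
    then show ?thesis using TA(2)[OF dist(4)] TA(2)[OF dist(5)] TA(2)[OF dist(6)] TB(2)[OF dist(4)] TB(2)[OF dist(5)] TB(2)[OF dist(6)] B23 B34 B24
      by algebra
  qed
  have A34: "A$v3$v4 = a" using T234 h24 A23 by simp
  have T124: "(2*a-1)*(A$v2$v4 - A$v1$v4) = 0"
  proof -
    have "A$v1$v2*A$v2$v4*A$v4$v1 + A$v1$v4*A$v4$v2*A$v2$v1 = B$v1$v2*B$v2$v4*B$v4$v1 + B$v1$v4*B$v4$v2*B$v2$v1"
      using m3 dist by blast
    then show ?thesis using TA(2)[OF dist(1)] TA(2)[OF dist(3)] TA(2)[OF dist(5)] TB(2)[OF dist(1)] TB(2)[OF dist(3)] TB(2)[OF dist(5)] B12 B14 B24 a_def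
      by algebra
  qed
  have A24: "A$v2$v4 = A$v1$v4" using T124 a2 by simp
  have T134: "(2*a-1)*(b - A$v1$v4) = 0"
  proof -
    have "A$v1$v3*A$v3$v4*A$v4$v1 + A$v1$v4*A$v4$v3*A$v3$v1 = B$v1$v3*B$v3$v4*B$v4$v1 + B$v1$v4*B$v4$v3*B$v3$v1"
      using m3 dist by blast
    then show ?thesis using TA(2)[OF dist(2)] TA(2)[OF dist(3)] TA(2)[OF dist(6)] TB(2)[OF dist(2)] TB(2)[OF dist(3)] TB(2)[OF dist(6)] B13 B14 B34 A34 b_def
      by algebra
  qed
  have A14: "A$v1$v4 = b" using T134 a2 by simp
  have cover: "\<And>x. x = v1 \<or> x = v2 \<or> x = v3 \<or> x = v4"
  proof -
    have "card {v1,v2,v3,v4} = 4" using dist by simp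
    then have "{v1,v2,v3,v4} = (UNIV::4 set)"
      by (intro card_subset_eq) auto
    then show "\<And>x. x = v1 \<or> x = v2 \<or> x = v3 \<or> x = v4" by blast
  qed
  define \<sigma> :: "4 \<Rightarrow> 4" where "\<sigma> x = (if x = v1 then 1 else if x = v2 then 2 else if x = v3 then 3 else 4)" for x
  have s1: "\<sigma> v1 = 1" "\<sigma> v2 = 2" "\<sigma> v3 = 3" "\<sigma> v4 = 4" using dist by (simp_all add: \<sigma>_def)
  have inj: "inj \<sigma>"
  proof (rule injI)
    fix x y assume "\<sigma> x = \<sigma> y" then show "x = y"
      using cover[of x] cover[of y] s1 by auto
  qed
  have perm: "\<sigma> permutes UNIV"
    using inj by (auto intro!: bij_imp_permutes simp: bij_betw_def finite_UNIV_inj_surj)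
  define P where "P = perm_matrix \<sigma>"
  have isP: "is_perm_matrix P" using perm by (auto simp: is_perm_matrix_def P_def)
  have a01: "a \<in> {0..1} - {1/2}" using a2 TA(3,4) by (auto simp: a_def)
  have b01: "b \<in> {0..1} - {1/2}" using b2 TA(3,4) by (auto simp: b_def)
  note As = TA(1) TA(2)[OF dist(1)] TA(2)[OF dist(2)] TA(2)[OF dist(3)] TA(2)[OF dist(4)] TA(2)[OF dist(5)] TA(2)[OF dist(6)]
  note Bs = TB(1) TB(2)[OF dist(1)] TB(2)[OF dist(2)] TB(2)[OF dist(3)] TB(2)[OF dist(4)] TB(2)[OF dist(5)] TB(2)[OF dist(6)]
  have EA: "A = P ** Mab a b ** transpose P"
    unfolding vec_eq_iff P_def conj_entry
  proof (intro allI)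
    fix i j show "A$i$j = Mab a b $ \<sigma> i $ \<sigma> j"
      using cover[of i] cover[of j]
      by (elim disjE) (simp_all add: s1 As Mab_def A23 A34 A24 A14 a_def[symmetric] b_def[symmetric])
  qed
  have EB: "B = P ** Mab (1 - a) b ** transpose P"
    unfolding vec_eq_iff P_def conj_entry
  proof (intro allI)
    fix i j show "B$i$j = Mab (1 - a) b $ \<sigma> i $ \<sigma> j"
      using cover[of i] cover[of j]
      by (elim disjE) (simp_all add: s1 Bs Mab_def B12 B23 B34 B13 B14 B24 A23 A34 A24 A14)
  qed
  have dd: "det A = det B \<longleftrightarrow> a = b \<or> a = 1 - b"
  proof -
    have "det A - det B = - (a-b)*(a+b-1)*(2*a-1)*(2*b-1)"
      using EA EB det_conj[OF perm] detMab[of a b] unfolding P_def by simp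
    then show ?thesis using a2 b2 by auto
  qed
  show ?thesis using isP a01 b01 EA EB dd by blast
qed

lemma comb:
  assumes "\<not> (e12 \<and> d12)"
    and "\<not> (e13 \<and> d13)"
    and "\<not> (e14 \<and> d14)"
    and "\<not> (e23 \<and> d23)"
    and "\<not> (e24 \<and> d24)"
    and "\<not> (e34 \<and> d34)"
    and "e12 \<or> e13 \<or> e14"
    and "e12 \<or> e23 \<or> e24"
    and "e13 \<or> e23 \<or> e34"
    and "e14 \<or> e24 \<or> e34"
    and "e13 \<or> e14 \<or> e23 \<or> e24"
    and "e12 \<or> e14 \<or> e23 \<or> e34"
    and "e12 \<or> e13 \<or> e24 \<or> e34"
    and "d12 \<or> d13 \<or> d14"
    and "d12 \<or> d23 \<or> d24"
    and "d13 \<or> d23 \<or> d34"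
    and "d14 \<or> d24 \<or> d34"
    and "d13 \<or> d14 \<or> d23 \<or> d24"
    and "d12 \<or> d14 \<or> d23 \<or> d34"
    and "d12 \<or> d13 \<or> d24 \<or> d34"
  shows "(d12 \<and> d23 \<and> d34 \<and> e13 \<and> e14 \<and> e24) \<or>
   (d12 \<and> d24 \<and> d34 \<and> e14 \<and> e13 \<and> e23) \<or>
   (d13 \<and> d23 \<and> d24 \<and> e12 \<and> e14 \<and> e34) \<or>
   (d13 \<and> d34 \<and> d24 \<and> e14 \<and> e12 \<and> e23) \<or>
   (d14 \<and> d24 \<and> d23 \<and> e12 \<and> e13 \<and> e34) \<or>
   (d14 \<and> d34 \<and> d23 \<and> e13 \<and> e12 \<and> e24) \<or>
   (d12 \<and> d13 \<and> d34 \<and> e23 \<and> e24 \<and> e14) \<or>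
   (d12 \<and> d14 \<and> d34 \<and> e24 \<and> e23 \<and> e13) \<or>
   (d23 \<and> d13 \<and> d14 \<and> e12 \<and> e24 \<and> e34) \<or>
   (d24 \<and> d14 \<and> d13 \<and> e12 \<and> e23 \<and> e34) \<or>
   (d13 \<and> d12 \<and> d24 \<and> e23 \<and> e34 \<and> e14) \<or>
   (d23 \<and> d12 \<and> d14 \<and> e13 \<and> e34 \<and> e24)"
  using assms by sat


lemma pm3z:
  assumes "gen_tournament M" "i \<noteq> j" "i \<noteq> k" "j \<noteq> k"
  shows "principal_minor M {i,j,k} = M$i$j*M$j$k*M$k$i + M$i$k*M$k$j*M$j$i"
proof -
  have "principal_minor M {i,j,k} = M$i$j * M$j$k * M$k$i + M$i$k * M$j$i * M$k$j"
    using assms(2-4) by (simp add: pm3 tour_facts(1)[OF assms(1)])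
  also have "M$i$k * M$j$i * M$k$j = M$i$k*M$k$j*M$j$i" by (simp only: mult_ac)
  finally show ?thesis .
qed

lemma cutE:
  assumes "graph_connected R" "u \<in> C" "v \<notin> C"
  shows "\<exists>x y. (x,y) \<in> R \<and> (x \<in> C \<and> y \<notin> C \<or> x \<notin> C \<and> y \<in> C)"
proof (rule ccontr)
  assume n: "\<not> ?thesis"
  have "(u,v) \<in> (R \<union> R\<inverse>)\<^sup>*" using assms(1) by (simp add: graph_connected_def)
  then have "v \<in> C"
  proof (induction rule: rtrancl_induct)
    case base then show ?case using assms(2) .
  next
    case (step y z) then show ?case using n by blast
  qed
  then show False using assms(3) by simp
qed

lemma Esym: "gen_tournament A \<Longrightarrow> gen_tournament B \<Longrightarrow> ((j,i) \<in> E_graph A B) = ((i,j) \<in> E_graph A B)"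
proof (cases "i = j")
  case False
  assume a: "gen_tournament A" "gen_tournament B"
  have "A$j$i = 1 - A$i$j" "B$j$i = 1 - B$i$j" using tour_facts(2)[OF a(1) False] tour_facts(2)[OF a(2) False] by auto
  then show ?thesis by (auto simp: E_graph_def)
qed simp

lemma Dsym: "gen_tournament A \<Longrightarrow> gen_tournament B \<Longrightarrow> ((j,i) \<in> D_graph A B) = ((i,j) \<in> D_graph A B)"
proof (cases "i = j")
  case False
  assume a: "gen_tournament A" "gen_tournament B"
  have "A$j$i = 1 - A$i$j" "B$j$i = 1 - B$i$j" using tour_facts(2)[OF a(1) False] tour_facts(2)[OF a(2) False] by auto
  then show ?thesis by (auto simp: D_graph_def)
qed simp

lemma ED_diag: "(i,i) \<notin> E_graph A B" "(i,i) \<notin> D_graph A B"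
  by (auto simp: E_graph_def D_graph_def)

lemma ED_disj: "(i,j) \<in> E_graph A B \<Longrightarrow> (i,j) \<in> D_graph A B \<Longrightarrow> False"
  by (auto simp: E_graph_def D_graph_def)

lemma ex4: "(\<exists>x::4. P x) \<longleftrightarrow> P 1 \<or> P 2 \<or> P 3 \<or> P 4"
  by (metis exhaust_4)

theorem lemma4p5:
  fixes A B :: "real^4^4"
  assumes "gen_tournament A" and "gen_tournament B"
    and "\<forall>S. card S = 2 \<or> card S = 3 \<longrightarrow> principal_minor A S = principal_minor B S"
    and "graph_connected (D_graph A B)" and "graph_connected (E_graph A B)"
  shows "\<exists>P a b. is_perm_matrix P \<and> a \<in> {0..1} - {1/2} \<and> b \<in> {0..1} - {1/2} \<and>
           A = P ** Mab a b ** transpose P \<and> B = P ** Mab (1 - a) b ** transpose P \<and>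
           (det A = det B \<longleftrightarrow> a = b \<or> a = 1 - b)"
proof -
  have m3: "\<forall>i j k. i \<noteq> j \<and> i \<noteq> k \<and> j \<noteq> k \<longrightarrow>
       A$i$j*A$j$k*A$k$i + A$i$k*A$k$j*A$j$i = B$i$j*B$j$k*B$k$i + B$i$k*B$k$j*B$j$i"
  proof (intro allI impI)
    fix i j k :: 4 assume d: "i \<noteq> j \<and> i \<noteq> k \<and> j \<noteq> k"
    then have "card {i,j,k} = 3" by simp
    then have e: "principal_minor A {i,j,k} = principal_minor B {i,j,k}" using assms(3) by blast
    have "principal_minor A {i,j,k} = A$i$j*A$j$k*A$k$i + A$i$k*A$k$j*A$j$i"
      using d pm3z[OF assms(1)] by blast
    moreover have "principal_minor B {i,j,k} = B$i$j*B$j$k*B$k$i + B$i$k*B$k$j*B$j$i"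
      using d pm3z[OF assms(2)] by blast
    ultimately show "A$i$j*A$j$k*A$k$i + A$i$k*A$k$j*A$j$i = B$i$j*B$j$k*B$k$i + B$i$k*B$k$j*B$j$i"
      using e by simp
  qed
  note symr = Esym[OF assms(1,2), where i=1 and j=2] Dsym[OF assms(1,2), where i=1 and j=2] Esym[OF assms(1,2), where i=1 and j=3] Dsym[OF assms(1,2), where i=1 and j=3] Esym[OF assms(1,2), where i=1 and j=4] Dsym[OF assms(1,2), where i=1 and j=4] Esym[OF assms(1,2), where i=2 and j=3] Dsym[OF assms(1,2), where i=2 and j=3] Esym[OF assms(1,2), where i=2 and j=4] Dsym[OF assms(1,2), where i=2 and j=4] Esym[OF assms(1,2), where i=3 and j=4] Dsym[OF assms(1,2), where i=3 and j=4]
  note cE = cutE[OF assms(5)] and cD = cutE[OF assms(4)]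
  have x0: "\<not> ((1,2) \<in> E_graph A B \<and> (1,2) \<in> D_graph A B)" using ED_disj by blast
  have x1: "\<not> ((1,3) \<in> E_graph A B \<and> (1,3) \<in> D_graph A B)" using ED_disj by blast
  have x2: "\<not> ((1,4) \<in> E_graph A B \<and> (1,4) \<in> D_graph A B)" using ED_disj by blast
  have x3: "\<not> ((2,3) \<in> E_graph A B \<and> (2,3) \<in> D_graph A B)" using ED_disj by blast
  have x4: "\<not> ((2,4) \<in> E_graph A B \<and> (2,4) \<in> D_graph A B)" using ED_disj by blast
  have x5: "\<not> ((3,4) \<in> E_graph A B \<and> (3,4) \<in> D_graph A B)" using ED_disj by blast
  have cE0: "(1,2) \<in> E_graph A B \<or> (1,3) \<in> E_graph A B \<or> (1,4) \<in> E_graph A B"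
    using cE[of 1 "{1::4}" 2] by (simp add: ex4 symr ED_diag disj_ac)
  have cE1: "(1,2) \<in> E_graph A B \<or> (2,3) \<in> E_graph A B \<or> (2,4) \<in> E_graph A B"
    using cE[of 2 "{2::4}" 1] by (simp add: ex4 symr ED_diag disj_ac)
  have cE2: "(1,3) \<in> E_graph A B \<or> (2,3) \<in> E_graph A B \<or> (3,4) \<in> E_graph A B"
    using cE[of 3 "{3::4}" 1] by (simp add: ex4 symr ED_diag disj_ac)
  have cE3: "(1,4) \<in> E_graph A B \<or> (2,4) \<in> E_graph A B \<or> (3,4) \<in> E_graph A B"
    using cE[of 4 "{4::4}" 1] by (simp add: ex4 symr ED_diag disj_ac)
  have cE4: "(1,3) \<in> E_graph A B \<or> (1,4) \<in> E_graph A B \<or> (2,3) \<in> E_graph A B \<or> (2,4) \<in> E_graph A B"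
    using cE[of 1 "{1::4,2::4}" 3] by (simp add: ex4 symr ED_diag disj_ac)
  have cE5: "(1,2) \<in> E_graph A B \<or> (1,4) \<in> E_graph A B \<or> (2,3) \<in> E_graph A B \<or> (3,4) \<in> E_graph A B"
    using cE[of 1 "{1::4,3::4}" 2] by (simp add: ex4 symr ED_diag disj_ac)
  have cE6: "(1,2) \<in> E_graph A B \<or> (1,3) \<in> E_graph A B \<or> (2,4) \<in> E_graph A B \<or> (3,4) \<in> E_graph A B"
    using cE[of 1 "{1::4,4::4}" 2] by (simp add: ex4 symr ED_diag disj_ac)
  have cD0: "(1,2) \<in> D_graph A B \<or> (1,3) \<in> D_graph A B \<or> (1,4) \<in> D_graph A B"
    using cD[of 1 "{1::4}" 2] by (simp add: ex4 symr ED_diag disj_ac)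
  have cD1: "(1,2) \<in> D_graph A B \<or> (2,3) \<in> D_graph A B \<or> (2,4) \<in> D_graph A B"
    using cD[of 2 "{2::4}" 1] by (simp add: ex4 symr ED_diag disj_ac)
  have cD2: "(1,3) \<in> D_graph A B \<or> (2,3) \<in> D_graph A B \<or> (3,4) \<in> D_graph A B"
    using cD[of 3 "{3::4}" 1] by (simp add: ex4 symr ED_diag disj_ac)
  have cD3: "(1,4) \<in> D_graph A B \<or> (2,4) \<in> D_graph A B \<or> (3,4) \<in> D_graph A B"
    using cD[of 4 "{4::4}" 1] by (simp add: ex4 symr ED_diag disj_ac)
  have cD4: "(1,3) \<in> D_graph A B \<or> (1,4) \<in> D_graph A B \<or> (2,3) \<in> D_graph A B \<or> (2,4) \<in> D_graph A B"
    using cD[of 1 "{1::4,2::4}" 3] by (simp add: ex4 symr ED_diag disj_ac)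
  have cD5: "(1,2) \<in> D_graph A B \<or> (1,4) \<in> D_graph A B \<or> (2,3) \<in> D_graph A B \<or> (3,4) \<in> D_graph A B"
    using cD[of 1 "{1::4,3::4}" 2] by (simp add: ex4 symr ED_diag disj_ac)
  have cD6: "(1,2) \<in> D_graph A B \<or> (1,3) \<in> D_graph A B \<or> (2,4) \<in> D_graph A B \<or> (3,4) \<in> D_graph A B"
    using cD[of 1 "{1::4,4::4}" 2] by (simp add: ex4 symr ED_diag disj_ac)
  from comb[OF x0 x1 x2 x3 x4 x5 cE0 cE1 cE2 cE3 cE4 cE5 cE6 cD0 cD1 cD2 cD3 cD4 cD5 cD6]
  show ?thesis
  proof (elim disjE)
    assume h: "(1,2) \<in> D_graph A B \<and> (2,3) \<in> D_graph A B \<and> (3,4) \<in> D_graph A B \<and> (1,3) \<in> E_graph A B \<and> (1,4) \<in> E_graph A B \<and> (2,4) \<in> E_graph A B"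
    show ?thesis by (rule core[OF assms(1,2) m3, of 1 2 3 4]) (use h in \<open>simp_all add: symr\<close>)
  next
    assume h: "(1,2) \<in> D_graph A B \<and> (2,4) \<in> D_graph A B \<and> (3,4) \<in> D_graph A B \<and> (1,4) \<in> E_graph A B \<and> (1,3) \<in> E_graph A B \<and> (2,3) \<in> E_graph A B"
    show ?thesis by (rule core[OF assms(1,2) m3, of 1 2 4 3]) (use h in \<open>simp_all add: symr\<close>)
  next
    assume h: "(1,3) \<in> D_graph A B \<and> (2,3) \<in> D_graph A B \<and> (2,4) \<in> D_graph A B \<and> (1,2) \<in> E_graph A B \<and> (1,4) \<in> E_graph A B \<and> (3,4) \<in> E_graph A B"
    show ?thesis by (rule core[OF assms(1,2) m3, of 1 3 2 4]) (use h in \<open>simp_all add: symr\<close>)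
  next
    assume h: "(1,3) \<in> D_graph A B \<and> (3,4) \<in> D_graph A B \<and> (2,4) \<in> D_graph A B \<and> (1,4) \<in> E_graph A B \<and> (1,2) \<in> E_graph A B \<and> (2,3) \<in> E_graph A B"
    show ?thesis by (rule core[OF assms(1,2) m3, of 1 3 4 2]) (use h in \<open>simp_all add: symr\<close>)
  next
    assume h: "(1,4) \<in> D_graph A B \<and> (2,4) \<in> D_graph A B \<and> (2,3) \<in> D_graph A B \<and> (1,2) \<in> E_graph A B \<and> (1,3) \<in> E_graph A B \<and> (3,4) \<in> E_graph A B"
    show ?thesis by (rule core[OF assms(1,2) m3, of 1 4 2 3]) (use h in \<open>simp_all add: symr\<close>)
  next
    assume h: "(1,4) \<in> D_graph A B \<and> (3,4) \<in> D_graph A B \<and> (2,3) \<in> D_graph A B \<and> (1,3) \<in> E_graph A B \<and> (1,2) \<in> E_graph A B \<and> (2,4) \<in> E_graph A B"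
    show ?thesis by (rule core[OF assms(1,2) m3, of 1 4 3 2]) (use h in \<open>simp_all add: symr\<close>)
  next
    assume h: "(1,2) \<in> D_graph A B \<and> (1,3) \<in> D_graph A B \<and> (3,4) \<in> D_graph A B \<and> (2,3) \<in> E_graph A B \<and> (2,4) \<in> E_graph A B \<and> (1,4) \<in> E_graph A B"
    show ?thesis by (rule core[OF assms(1,2) m3, of 2 1 3 4]) (use h in \<open>simp_all add: symr\<close>)
  next
    assume h: "(1,2) \<in> D_graph A B \<and> (1,4) \<in> D_graph A B \<and> (3,4) \<in> D_graph A B \<and> (2,4) \<in> E_graph A B \<and> (2,3) \<in> E_graph A B \<and> (1,3) \<in> E_graph A B"
    show ?thesis by (rule core[OF assms(1,2) m3, of 2 1 4 3]) (use h in \<open>simp_all add: symr\<close>)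
  next
    assume h: "(2,3) \<in> D_graph A B \<and> (1,3) \<in> D_graph A B \<and> (1,4) \<in> D_graph A B \<and> (1,2) \<in> E_graph A B \<and> (2,4) \<in> E_graph A B \<and> (3,4) \<in> E_graph A B"
    show ?thesis by (rule core[OF assms(1,2) m3, of 2 3 1 4]) (use h in \<open>simp_all add: symr\<close>)
  next
    assume h: "(2,4) \<in> D_graph A B \<and> (1,4) \<in> D_graph A B \<and> (1,3) \<in> D_graph A B \<and> (1,2) \<in> E_graph A B \<and> (2,3) \<in> E_graph A B \<and> (3,4) \<in> E_graph A B"
    show ?thesis by (rule core[OF assms(1,2) m3, of 2 4 1 3]) (use h in \<open>simp_all add: symr\<close>)
  next
    assume h: "(1,3) \<in> D_graph A B \<and> (1,2) \<in> D_graph A B \<and> (2,4) \<in> D_graph A B \<and> (2,3) \<in> E_graph A B \<and> (3,4) \<in> E_graph A B \<and> (1,4) \<in> E_graph A B"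
    show ?thesis by (rule core[OF assms(1,2) m3, of 3 1 2 4]) (use h in \<open>simp_all add: symr\<close>)
  next
    assume h: "(2,3) \<in> D_graph A B \<and> (1,2) \<in> D_graph A B \<and> (1,4) \<in> D_graph A B \<and> (1,3) \<in> E_graph A B \<and> (3,4) \<in> E_graph A B \<and> (2,4) \<in> E_graph A B"
    show ?thesis by (rule core[OF assms(1,2) m3, of 3 2 1 4]) (use h in \<open>simp_all add: symr\<close>)
  qed
qed

end
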